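(* Let $h\ge 2$, $1\le t\le 2h-1$, and let $f_1,\dots,f_t$ be positive integers with $f_1+\dots+f_t\le 2h$. For a positive integer $n$, let $R^{\mathrm{Dist}}(n)$ be the largest integer $q\ge 0$ such that there exist $qt$ pairwise distinct elements $d_1,\dots,d_{qt}\in B$ with $f_1d_{jt+1}+\dots+f_td_{jt+t}=n$ for every $0\le j\le q-1$. Then with probability $1$, $R^{\mathrm{Dist}}(n)\le 4h$ for all sufficiently large $n$.
   Context: Fix an integer $h\ge 2$. Let $B$ be a random set of positive integers in which the events $\{n\in B\}$, $n=1,2,\dots$, are mutually independent and $\mathbb{P}(n\in B)=n^{-\frac{4h-3}{4h-1}}$. *)

theory Defs
  imports "HOL-Probability.Probability"
begin

text \<open>Coefficients are indexed f 0, ..., f (t-1) (i.e. f_{i+1} of the paper is f i).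
  dist_reps B f t n q: there are q*t pairwise distinct elements d 0, ..., d (q*t-1) of B
  such that for every j < q, sum over i < t of f i * d (j*t+i) equals n.\<close>

definition dist_reps :: "nat set \<Rightarrow> (nat \<Rightarrow> nat) \<Rightarrow> nat \<Rightarrow> nat \<Rightarrow> nat \<Rightarrow> bool" where
  "dist_reps B f t n q \<longleftrightarrow>
     (\<exists>d :: nat \<Rightarrow> nat. inj_on d {..<q*t} \<and> d ` {..<q*t} \<subseteq> B \<and>
        (\<forall>j<q. (\<Sum>i<t. f i * d (j*t+i)) = n))"

text \<open>R^Dist(n): the largest q \<ge> 0 with dist_reps (well defined when B consists of
  positive integers and all f i are positive, since then q*t \<le> n).\<close>
definition RDist :: "nat set \<Rightarrow> (nat \<Rightarrow> nat) \<Rightarrow> nat \<Rightarrow> nat \<Rightarrow> nat" where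
  "RDist B f t n = (GREATEST q. dist_reps B f t n q)"

end

theory Submission
  imports Defs
begin

lemma powr_step:
  fixes a :: real and n :: nat
  assumes "0 < a" "a < 1" "n \<ge> 1"
  shows "(1-a) * real (Suc n) powr (-a) \<le> real (Suc n) powr (1-a) - real n powr (1-a)"
proof -
  have "\<exists>z. real n < z \<and> z < real (Suc n) \<and>
     real (Suc n) powr (1-a) - real n powr (1-a) = (real (Suc n) - real n) * ((1-a) * z powr ((1-a) - 1))"
  proof (rule MVT2)
    fix x assume "real n \<le> x" "x \<le> real (Suc n)"
    then have "x > 0" using assms by auto
    from has_real_derivative_powr[OF this, of "1-a"]
    show "((\<lambda>x. x powr (1-a)) has_real_derivative (1-a) * x powr ((1-a) - 1)) (at x)" .
  qed simp
  then obtain z where z: "real n < z" "z < real (Suc n)"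
    "real (Suc n) powr (1-a) - real n powr (1-a) = (1-a) * z powr (-a)" by auto
  have "real (Suc n) powr (-a) \<le> z powr (-a)"
    apply (rule powr_mono2') using z assms by auto
  then show ?thesis using z assms by (simp add: mult_left_mono)
qed

lemma sum_powr_bound:
  fixes a :: real
  assumes "0 < a" "a < 1"
  shows "(\<Sum>x\<in>{1..n}. real x powr (-a)) \<le> real n powr (1-a) / (1-a)"
proof (induction n)
  case 0 then show ?case by simp
next
  case (Suc n)
  have eq: "(\<Sum>x\<in>{1..Suc n}. real x powr (-a)) = (\<Sum>x\<in>{1..n}. real x powr (-a)) + real (Suc n) powr (-a)"
    by simp
  show ?case
  proof (cases "n = 0")
    case True then show ?thesis using assms by (simp add: field_simps)
  next
    case False
    have "(1-a) * real (Suc n) powr (-a) \<le> real (Suc n) powr (1-a) - real n powr (1-a)"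
      using powr_step[OF assms, of n] False by simp
    then have "real (Suc n) powr (-a) \<le> (real (Suc n) powr (1-a) - real n powr (1-a)) / (1-a)"
      using assms by (simp add: field_simps)
    then show ?thesis using Suc eq assms by (simp add: field_simps)
  qed
qed

lemma exists_large:
  fixes e f :: "nat \<Rightarrow> nat"
  assumes "t \<ge> 1" "\<And>i. i < t \<Longrightarrow> f i > 0" "(\<Sum>i<t. f i * e i) = n"
  shows "\<exists>m<t. n \<le> (\<Sum>i<t. f i) * e m"
proof (rule ccontr)
  assume "\<not> ?thesis"
  then have lt: "\<And>m. m < t \<Longrightarrow> (\<Sum>i<t. f i) * e m < n" by auto
  have "(\<Sum>m<t. f m * ((\<Sum>i<t. f i) * e m)) < (\<Sum>m<t. f m * n)"
  proof (rule sum_strict_mono_ex1)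
    show "\<forall>m\<in>{..<t}. f m * ((\<Sum>i<t. f i) * e m) \<le> f m * n"
      using lt by (auto intro: mult_left_mono less_imp_le)
    have "0 < t" using assms by simp
    then show "\<exists>m\<in>{..<t}. f m * ((\<Sum>i<t. f i) * e m) < f m * n"
      using lt assms(2) by (intro bexI[of _ 0]) auto
  qed simp
  also have "\<dots> = (\<Sum>i<t. f i) * n" by (simp add: sum_distrib_right)
  also have "(\<Sum>m<t. f m * ((\<Sum>i<t. f i) * e m)) = (\<Sum>m<t. (\<Sum>i<t. f i) * (f m * e m))"
    by (simp add: mult.left_commute)
  also have "\<dots> = (\<Sum>i<t. f i) * n"
    using assms(3) by (simp only: sum_distrib_left[symmetric])
  finally show False by simp
qed

lemma rep_bound:
  fixes f :: "nat \<Rightarrow> nat" and a :: real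
  assumes a: "0 < a" "a < 1" and t: "t \<ge> 1" and fpos: "\<And>i. i < t \<Longrightarrow> f i > 0"
    and F: "(\<Sum>i<t. f i) = F" and n: "n \<ge> 1"
  shows "(\<Sum>e\<in>{e \<in> {..<t} \<rightarrow>\<^sub>E {1..n}. (\<Sum>i<t. f i * e i) = n}. \<Prod>i<t. real (e i) powr (-a))
     \<le> real t * ((real n / real F) powr (-a) * (real n powr (1-a) / (1-a)) ^ (t-1))"
proof -
  define T where "T = {e \<in> {..<t} \<rightarrow>\<^sub>E {1..n}. (\<Sum>i<t. f i * e i) = n}"
  define W where "W = (\<lambda>e. \<Prod>i<t. real (e i) powr (-a))"
  define c where "c = (real n / real F) powr (-a) * (real n powr (1-a) / (1-a)) ^ (t-1)"
  have finT: "finite T" unfolding T_def by (rule finite_subset[of _ "{..<t} \<rightarrow>\<^sub>E {1..n}"]) (auto intro: finite_PiE)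
  have Fpos: "F > 0" using F fpos t by (metis sum_pos finite_lessThan lessThan_iff less_le_trans zero_less_one empty_iff lessThan_def bot_nat_0.not_eq_extremum lessThan_empty_iff)
  have W0: "W e \<ge> 0" for e unfolding W_def by (simp add: prod_nonneg)
  have "W e \<le> (\<Sum>m<t. if n \<le> F * e m then W e else 0)" if eT: "e \<in> T" for e
  proof -
    obtain m where m: "m < t" "n \<le> F * e m" using exists_large[of t f e n, OF t fpos] eT[unfolded T_def] F by auto
    have "W e = (if n \<le> F * e m then W e else 0)" using m by simp
    also have "\<dots> \<le> (\<Sum>m<t. if n \<le> F * e m then W e else 0)"
      by (rule member_le_sum) (use m W0 in auto)
    finally show ?thesis .
  qed
  then have "sum W T \<le> (\<Sum>e\<in>T. \<Sum>m<t. if n \<le> F * e m then W e else 0)" by (rule sum_mono)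
  also have "\<dots> = (\<Sum>m<t. \<Sum>e\<in>T. if n \<le> F * e m then W e else 0)" by (rule sum.swap)
  also have "\<dots> \<le> (\<Sum>m<t. c)"
  proof (rule sum_mono)
    fix m assume m: "m \<in> {..<t}"
    define Tm where "Tm = {e \<in> T. n \<le> F * e m}"
    define I where "I = {..<t} - {m}"
    define S where "S = (\<Sum>x\<in>{1..n}. real x powr (-a))"
    have finTm: "finite Tm" using finT unfolding Tm_def by simp
    have "(\<Sum>e\<in>T. if n \<le> F * e m then W e else 0) = sum W Tm"
      unfolding Tm_def by (simp add: sum.inter_filter[OF finT])
    also have "\<dots> \<le> (\<Sum>e\<in>Tm. (real n / real F) powr (-a) * (\<Prod>i\<in>I. real (e i) powr (-a)))"
    proof (rule sum_mono)
      fix e assume e: "e \<in> Tm"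
      have W_eq: "W e = real (e m) powr (-a) * (\<Prod>i\<in>I. real (e i) powr (-a))"
        unfolding W_def I_def using m by (simp add: prod.remove)
      have eT: "e \<in> {..<t} \<rightarrow>\<^sub>E {1..n}" and em2: "n \<le> F * e m" using e unfolding Tm_def T_def by auto
      have em: "e m \<ge> 1" using PiE_mem[OF eT] m by auto
      have "real n \<le> real F * real (e m)" using em2 by (metis of_nat_le_iff of_nat_mult)
      then have "real n / real F \<le> real (e m)" using Fpos
        by (simp add: pos_divide_le_eq mult.commute)
      then have "real (e m) powr (-a) \<le> (real n / real F) powr (-a)"
        using n Fpos a by (intro powr_mono2') auto
      then show "W e \<le> (real n / real F) powr (-a) * (\<Prod>i\<in>I. real (e i) powr (-a))"
        unfolding W_eq by (intro mult_right_mono) (auto simp: prod_nonneg)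
    qed
    also have "\<dots> = (real n / real F) powr (-a) * (\<Sum>e\<in>Tm. \<Prod>i\<in>I. real (e i) powr (-a))"
      by (simp add: sum_distrib_left)
    also have "(\<Sum>e\<in>Tm. \<Prod>i\<in>I. real (e i) powr (-a)) \<le> S ^ (t-1)"
    proof -
      have inj: "inj_on (\<lambda>e. restrict e I) Tm"
      proof (rule inj_onI)
        fix e1 e2 assume e1: "e1 \<in> Tm" and e2: "e2 \<in> Tm" and eq: "restrict e1 I = restrict e2 I"
        have agree: "e1 i = e2 i" if "i \<in> I" for i using eq that by (metis restrict_apply')
        have s1: "(\<Sum>i<t. f i * e1 i) = f m * e1 m + (\<Sum>i\<in>I. f i * e1 i)"
          unfolding I_def using m by (simp add: sum.remove)
        have s2: "(\<Sum>i<t. f i * e2 i) = f m * e2 m + (\<Sum>i\<in>I. f i * e2 i)"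
          unfolding I_def using m by (simp add: sum.remove)
        have "(\<Sum>i\<in>I. f i * e1 i) = (\<Sum>i\<in>I. f i * e2 i)" using agree by simp
        moreover have "(\<Sum>i<t. f i * e1 i) = n" "(\<Sum>i<t. f i * e2 i) = n"
          using e1 e2 unfolding Tm_def T_def by blast+
        ultimately have "f m * e1 m = f m * e2 m" using s1 s2 by linarith
        then have em: "e1 m = e2 m" using fpos[of m] m by simp
        show "e1 = e2"
        proof
          fix i show "e1 i = e2 i"
          proof (cases "i < t")
            case True then show ?thesis using agree em unfolding I_def by (cases "i = m") auto
          next
            case False
            have "e1 \<in> {..<t} \<rightarrow>\<^sub>E {1..n}" "e2 \<in> {..<t} \<rightarrow>\<^sub>E {1..n}"
              using e1 e2 unfolding Tm_def T_def by blast+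
            then show ?thesis using PiE_arb[of e1 "{..<t}" _ i] PiE_arb[of e2 "{..<t}" _ i] False by simp
          qed
        qed
      qed
      have "(\<Sum>e\<in>Tm. \<Prod>i\<in>I. real (e i) powr (-a)) = (\<Sum>e\<in>Tm. \<Prod>i\<in>I. real (restrict e I i) powr (-a))"
        by simp
      also have "\<dots> = (\<Sum>g\<in>(\<lambda>e. restrict e I) ` Tm. \<Prod>i\<in>I. real (g i) powr (-a))"
        by (simp add: sum.reindex[OF inj])
      also have "\<dots> \<le> (\<Sum>g\<in>PiE I (\<lambda>_. {1..n}). \<Prod>i\<in>I. real (g i) powr (-a))"
      proof (rule sum_mono2)
        show "finite (PiE I (\<lambda>_. {1..n}))" unfolding I_def by (intro finite_PiE) auto
        show "(\<lambda>e. restrict e I) ` Tm \<subseteq> PiE I (\<lambda>_. {1..n})"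
        proof
          fix g assume "g \<in> (\<lambda>e. restrict e I) ` Tm"
          then obtain e where e: "e \<in> Tm" and g: "g = restrict e I" by blast
          have eP: "e \<in> {..<t} \<rightarrow>\<^sub>E {1..n}" using e unfolding Tm_def T_def by blast
          have "\<forall>i\<in>I. e i \<in> {1..n}" using PiE_mem[OF eP] unfolding I_def by blast
          then show "g \<in> PiE I (\<lambda>_. {1..n})" unfolding g by (simp only: restrict_PiE_iff)
        qed
      qed (simp add: prod_nonneg)
      also have "\<dots> = (\<Prod>i\<in>I. S)"
        unfolding S_def by (subst prod_sum_PiE) (auto simp: I_def)
      also have "\<dots> = S ^ (t-1)" using m by (simp add: I_def)
      finally show ?thesis .
    qed
    also have "S \<le> real n powr (1-a) / (1-a)" unfolding S_def by (rule sum_powr_bound[OF a])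
    then have "S ^ (t-1) \<le> (real n powr (1-a) / (1-a)) ^ (t-1)"
      by (intro power_mono) (auto simp: S_def sum_nonneg)
    finally show "(\<Sum>e\<in>T. if n \<le> F * e m then W e else 0) \<le> c"
      unfolding c_def by (simp add: mult_left_mono)
  qed
  also have "\<dots> = real t * c" by simp
  finally show ?thesis unfolding T_def W_def c_def .
qed

lemma prod_blocks:
  fixes g :: "nat \<Rightarrow> real"
  shows "(\<Prod>k<Q*t. g k) = (\<Prod>j<Q. \<Prod>i<t. g (j*t+i))"
proof -
  have "(\<Prod>k<Q*t. g k) = (\<Prod>j<Q. \<Prod>k\<in>{j*t..<j*t+t}. g k)"
    by (rule prod.nat_group[symmetric])
  also have "\<dots> = (\<Prod>j<Q. \<Prod>i<t. g (j*t+i))"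
  proof (rule prod.cong[OF refl])
    fix j
    have "(\<Prod>k\<in>{j*t..<j*t+t}. g k) = (\<Prod>k\<in>{0+j*t..<t+j*t}. g k)" by (simp add: add.commute)
    also have "\<dots> = (\<Prod>i\<in>{0..<t}. g (i + j*t))" by (rule prod.shift_bounds_nat_ivl)
    also have "\<dots> = (\<Prod>i<t. g (j*t+i))" by (simp add: atLeast0LessThan add.commute)
    finally show "(\<Prod>k\<in>{j*t..<j*t+t}. g k) = (\<Prod>i<t. g (j*t+i))" .
  qed
  finally show ?thesis .
qed

lemma block_bound:
  fixes w :: "nat \<Rightarrow> real" and f :: "nat \<Rightarrow> nat"
  assumes w: "\<And>x. w x \<ge> 0" and t: "t \<ge> 1"
  shows "(\<Sum>d\<in>{d \<in> {..<Q*t} \<rightarrow>\<^sub>E {1..n}. \<forall>j<Q. (\<Sum>i<t. f i * d (j*t+i)) = n}. \<Prod>k<Q*t. w (d k))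
     \<le> (\<Sum>e\<in>{e \<in> {..<t} \<rightarrow>\<^sub>E {1..n}. (\<Sum>i<t. f i * e i) = n}. \<Prod>i<t. w (e i)) ^ Q"
proof -
  define D where "D = {d \<in> {..<Q*t} \<rightarrow>\<^sub>E {1..n}. \<forall>j<Q. (\<Sum>i<t. f i * d (j*t+i)) = n}"
  define T where "T = {e \<in> {..<t} \<rightarrow>\<^sub>E {1..n}. (\<Sum>i<t. f i * e i) = n}"
  define W where "W = (\<lambda>e. \<Prod>i<t. w (e i))"
  define \<phi> :: "(nat \<Rightarrow> nat) \<Rightarrow> nat \<Rightarrow> nat \<Rightarrow> nat" where "\<phi> = (\<lambda>d. restrict (\<lambda>j. restrict (\<lambda>i. d (j*t+i)) {..<t}) {..<Q})"
  have finT: "finite T" unfolding T_def by (rule finite_subset[of _ "{..<t} \<rightarrow>\<^sub>E {1..n}"]) (auto intro: finite_PiE)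
  have jt: "j*t+i < Q*t" if "j < Q" "i < t" for j i
  proof -
    have "j*t+i < j*t+t" using that by simp
    also have "\<dots> = Suc j * t" by simp
    also have "\<dots> \<le> Q*t" using that by (intro mult_right_mono) auto
    finally show ?thesis .
  qed
  have img: "\<phi> ` D \<subseteq> PiE {..<Q} (\<lambda>_. T)"
  proof
    fix g assume "g \<in> \<phi> ` D"
    then obtain d where d: "d \<in> D" and g: "g = \<phi> d" by blast
    have dP: "d \<in> {..<Q*t} \<rightarrow>\<^sub>E {1..n}" and deq: "\<forall>j<Q. (\<Sum>i<t. f i * d (j*t+i)) = n"
      using d unfolding D_def by blast+
    have "restrict (\<lambda>i. d (j*t+i)) {..<t} \<in> T" if j: "j < Q" for j
    proof -
      have "\<forall>i\<in>{..<t}. d (j*t+i) \<in> {1..n}" using PiE_mem[OF dP] jt[OF j] by blast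
      then have "restrict (\<lambda>i. d (j*t+i)) {..<t} \<in> {..<t} \<rightarrow>\<^sub>E {1..n}"
        by (simp only: restrict_PiE_iff)
      moreover have "(\<Sum>i<t. f i * restrict (\<lambda>i. d (j*t+i)) {..<t} i) = n"
        using deq j by simp
      ultimately show ?thesis unfolding T_def by blast
    qed
    then show "g \<in> PiE {..<Q} (\<lambda>_. T)" unfolding g \<phi>_def by (simp only: restrict_PiE_iff) blast
  qed
  have inj: "inj_on \<phi> D"
  proof (rule inj_onI)
    fix d1 d2 assume d1: "d1 \<in> D" and d2: "d2 \<in> D" and eq: "\<phi> d1 = \<phi> d2"
    have P1: "d1 \<in> {..<Q*t} \<rightarrow>\<^sub>E {1..n}" and P2: "d2 \<in> {..<Q*t} \<rightarrow>\<^sub>E {1..n}"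
      using d1 d2 unfolding D_def by blast+
    show "d1 = d2"
    proof
      fix k show "d1 k = d2 k"
      proof (cases "k < Q*t")
        case True
        define j where "j = k div t"
        define i where "i = k mod t"
        have k: "k = j*t+i" unfolding j_def i_def by simp
        have i: "i < t" unfolding i_def using t by simp
        have j: "j < Q" unfolding j_def using True t by (simp add: less_mult_imp_div_less)
        have "\<phi> d1 j i = \<phi> d2 j i" using eq by simp
        then show ?thesis using i j unfolding \<phi>_def k by simp
      next
        case False
        then show ?thesis using PiE_arb[OF P1, of k] PiE_arb[OF P2, of k] by simp
      qed
    qed
  qed
  have "(\<Sum>d\<in>D. \<Prod>k<Q*t. w (d k)) = (\<Sum>d\<in>D. \<Prod>j<Q. W (\<phi> d j))"
  proof (rule sum.cong[OF refl])
    fix d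
    have "(\<Prod>k<Q*t. w (d k)) = (\<Prod>j<Q. \<Prod>i<t. w (d (j*t+i)))" by (rule prod_blocks)
    also have "\<dots> = (\<Prod>j<Q. W (\<phi> d j))" unfolding W_def \<phi>_def by simp
    finally show "(\<Prod>k<Q*t. w (d k)) = (\<Prod>j<Q. W (\<phi> d j))" .
  qed
  also have "\<dots> = (\<Sum>g\<in>\<phi> ` D. \<Prod>j<Q. W (g j))" by (simp add: sum.reindex[OF inj])
  also have "\<dots> \<le> (\<Sum>g\<in>PiE {..<Q} (\<lambda>_. T). \<Prod>j<Q. W (g j))"
    by (rule sum_mono2[OF _ img]) (simp_all add: finite_PiE finT prod_nonneg W_def w)
  also have "\<dots> = (\<Prod>j<Q. \<Sum>e\<in>T. W e)"
    using prod_sum_PiE[of "{..<Q}" "\<lambda>_. T" "\<lambda>_ e. W e"] finT by simp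
  also have "\<dots> = (\<Sum>e\<in>T. W e) ^ Q" by simp
  finally show ?thesis unfolding D_def T_def W_def .
qed

lemma idx_decomp:
  fixes k t Q :: nat
  assumes "k < Q*t"
  shows "k = (k div t)*t + k mod t \<and> k div t < Q \<and> k mod t < t"
proof -
  have t: "t > 0" using assms by (cases t) auto
  show ?thesis using assms t by (simp add: less_mult_imp_div_less)
qed

lemma idx_lt:
  fixes j i t Q :: nat
  assumes "j < Q" "i < t"
  shows "j*t+i < Q*t"
proof -
  have "j*t+i < j*t+t" using assms by simp
  also have "\<dots> = Suc j * t" by simp
  also have "\<dots> \<le> Q*t" using assms by (intro mult_right_mono) auto
  finally show ?thesis .
qed

lemma dist_reps_mono:
  assumes "dist_reps Bs f t n q" "q' \<le> q"
  shows "dist_reps Bs f t n q'"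
proof -
  obtain d where d: "inj_on d {..<q*t}" "d ` {..<q*t} \<subseteq> Bs" "\<forall>j<q. (\<Sum>i<t. f i * d (j*t+i)) = n"
    using assms(1) unfolding dist_reps_def by blast
  have sub: "{..<q'*t} \<subseteq> {..<q*t}" unfolding lessThan_subset_iff by (rule mult_le_mono1[OF assms(2)])
  have "d ` {..<q'*t} \<subseteq> Bs" using image_mono[OF sub, of d] d(2) by (rule order_trans)
  moreover have "inj_on d {..<q'*t}" using d(1) sub by (rule inj_on_subset)
  moreover have "\<forall>j<q'. (\<Sum>i<t. f i * d (j*t+i)) = n" using d(3) assms(2) by auto
  ultimately show ?thesis unfolding dist_reps_def by blast
qed

lemma RDist_le:
  assumes "\<not> dist_reps Bs f t n (Suc q0)"
  shows "RDist Bs f t n \<le> q0"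
proof -
  have bound: "y \<le> q0" if "dist_reps Bs f t n y" for y
  proof (rule ccontr)
    assume "\<not> y \<le> q0"
    then have "Suc q0 \<le> y" by simp
    then show False using dist_reps_mono[OF that] assms by blast
  qed
  have "dist_reps Bs f t n 0" unfolding dist_reps_def by auto
  then have "dist_reps Bs f t n (GREATEST q. dist_reps Bs f t n q)"
    using GreatestI_ex_nat[of "dist_reps Bs f t n" q0] bound by blast
  then show ?thesis unfolding RDist_def using bound by blast
qed

lemma dist_reps_witness:
  assumes "dist_reps Bs f t n Q" "Bs \<subseteq> {1..}" "\<And>i. i < t \<Longrightarrow> f i > 0"
  shows "\<exists>d\<in>{d \<in> {..<Q*t} \<rightarrow>\<^sub>E {1..n}. inj_on d {..<Q*t} \<and> (\<forall>j<Q. (\<Sum>i<t. f i * d (j*t+i)) = n)}.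
           d ` {..<Q*t} \<subseteq> Bs"
proof -
  obtain d where d: "inj_on d {..<Q*t}" "d ` {..<Q*t} \<subseteq> Bs" "\<forall>j<Q. (\<Sum>i<t. f i * d (j*t+i)) = n"
    using assms(1) unfolding dist_reps_def by blast
  define d' where "d' = restrict d {..<Q*t}"
  have range: "d k \<in> {1..n}" if k: "k < Q*t" for k
  proof -
    have "d k \<in> Bs" using d(2) k by blast
    then have k1: "d k \<ge> 1" using assms(2) by auto
    obtain j i where ji: "k = j*t+i" "j < Q" "i < t" using idx_decomp[OF k] by blast
    have "f i * d (j*t+i) \<le> (\<Sum>i<t. f i * d (j*t+i))"
      by (rule member_le_sum) (use ji in auto)
    also have "\<dots> = n" using d(3) ji by blast
    finally have "f i * d k \<le> n" using ji by simp
    moreover have "1 * d k \<le> f i * d k" using assms(3)[OF ji(3)] by (intro mult_right_mono) auto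
    ultimately have "d k \<le> n" by linarith
    then show ?thesis using k1 by simp
  qed
  have "d' \<in> {..<Q*t} \<rightarrow>\<^sub>E {1..n}" unfolding d'_def using range by (simp only: restrict_PiE_iff) blast
  moreover have "inj_on d' {..<Q*t}" unfolding d'_def using d(1) by (simp add: inj_on_def)
  moreover have "\<forall>j<Q. (\<Sum>i<t. f i * d' (j*t+i)) = n"
  proof (intro allI impI)
    fix j assume j: "j < Q"
    have "(\<Sum>i<t. f i * d' (j*t+i)) = (\<Sum>i<t. f i * d (j*t+i))"
      unfolding d'_def using idx_lt[OF j] by (intro sum.cong) auto
    then show "(\<Sum>i<t. f i * d' (j*t+i)) = n" using d(3) j by simp
  qed
  ultimately have mem: "d' \<in> {d \<in> {..<Q*t} \<rightarrow>\<^sub>E {1..n}. inj_on d {..<Q*t} \<and> (\<forall>j<Q. (\<Sum>i<t. f i * d (j*t+i)) = n)}"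
    by (simp only: mem_Collect_eq)
  have sub: "d' ` {..<Q*t} \<subseteq> Bs" unfolding d'_def image_restrict_eq using d(2) .
  show ?thesis by (rule bexI[of "\<lambda>d. d ` {..<Q*t} \<subseteq> Bs", OF sub mem])
qed

theorem mainTheorem8:
  fixes M :: "'a measure" and B :: "'a \<Rightarrow> nat set"
    and h t :: nat and f :: "nat \<Rightarrow> nat"
  assumes "prob_space M"
    and "h \<ge> 2"
    and "1 \<le> t" and "t \<le> 2*h - 1"
    and "\<And>i. i < t \<Longrightarrow> f i > 0"
    and "(\<Sum>i<t. f i) \<le> 2*h"
    and "\<And>\<omega>. \<omega> \<in> space M \<Longrightarrow> B \<omega> \<subseteq> {1..}"
    and "\<And>n. n \<ge> 1 \<Longrightarrow> {\<omega> \<in> space M. n \<in> B \<omega>} \<in> sets M"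
    and "prob_space.indep_events M (\<lambda>n. {\<omega> \<in> space M. n \<in> B \<omega>}) {1..}"
    and "\<And>n. n \<ge> 1 \<Longrightarrow> measure M {\<omega> \<in> space M. n \<in> B \<omega>}
            = real n powr (- (4 * real h - 3) / (4 * real h - 1))"
  shows "AE \<omega> in M. \<forall>\<^sub>F n in sequentially. RDist (B \<omega>) f t n \<le> 4*h"
proof -
  interpret P: prob_space M by (rule assms(1))
  define \<alpha> where "\<alpha> = (4*real h - 3)/(4*real h - 1)"
  define \<beta> where "\<beta> = 1/(4*real h - 1)"
  define Q where "Q = Suc (4*h)"
  define F where "F = (\<Sum>i<t. f i)"
  define A where "A = (\<lambda>n. {\<omega>\<in>space M. n \<in> B \<omega>})"
  define p where "p = (\<lambda>x::nat. real x powr (-\<alpha>))"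
  define D where "D = (\<lambda>n. {d \<in> {..<Q*t} \<rightarrow>\<^sub>E {1..n}. inj_on d {..<Q*t} \<and> (\<forall>j<Q. (\<Sum>i<t. f i * d (j*t+i)) = n)})"
  define D' where "D' = (\<lambda>n. {d \<in> {..<Q*t} \<rightarrow>\<^sub>E {1..n}. \<forall>j<Q. (\<Sum>i<t. f i * d (j*t+i)) = n})"
  define T where "T = (\<lambda>n. {e \<in> {..<t} \<rightarrow>\<^sub>E {1..n}. (\<Sum>i<t. f i * e i) = n})"
  define S where "S = (\<lambda>n. \<Sum>e\<in>T n. \<Prod>i<t. p (e i))"
  define G where "G = (\<lambda>d::nat\<Rightarrow>nat. \<Inter>k\<in>d ` {..<Q*t}. A k)"
  define U where "U = (\<lambda>n. \<Union>d\<in>D n. G d)"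
  define K where "K = real t * (real F powr \<alpha> * (1/(1-\<alpha>))^(t-1))"
  have h2: "real h \<ge> 2" using assms(2) by simp
  have \<alpha>: "0 < \<alpha>" "\<alpha> < 1" unfolding \<alpha>_def using h2 by (auto simp: field_simps)
  have Qt: "Q*t \<ge> 1" unfolding Q_def using assms(3) by simp
  have t: "t \<ge> 1" using assms(3) .
  have K0: "K \<ge> 0" unfolding K_def using \<alpha> by simp
  have finD': "finite (D' n)" for n
    unfolding D'_def by (rule finite_subset[of _ "{..<Q*t} \<rightarrow>\<^sub>E {1..n}"]) (auto intro: finite_PiE)
  have DD': "D n \<subseteq> D' n" for n unfolding D_def D'_def by blast
  have finD: "finite (D n)" for n using finite_subset[OF DD' finD'] .
  have p0: "p x \<ge> 0" for x unfolding p_def by simp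
  have Dmem: "d \<in> {..<Q*t} \<rightarrow>\<^sub>E {1..n}" "inj_on d {..<Q*t}" if "d \<in> D n" for d n
    using that unfolding D_def by blast+
  have Dval: "d k \<ge> 1" if "d \<in> D n" "k < Q*t" for d n k
    using PiE_mem[OF Dmem(1)[OF that(1)], of k] that(2) by simp
  have Asets: "A k \<in> sets M" if "k \<ge> 1" for k unfolding A_def using assms(8)[OF that] .
  have nonempty: "d ` {..<Q*t} \<noteq> {}" for d :: "nat \<Rightarrow> nat"
  proof -
    have "0 \<in> {..<Q*t}" using Qt by simp
    then show ?thesis by blast
  qed
  have Gsets: "G d \<in> sets M" if "d \<in> D n" for d n
    unfolding G_def
  proof (rule sets.finite_INT)
    show "finite (d ` {..<Q*t})" by simp
    show "d ` {..<Q*t} \<noteq> {}" by (rule nonempty)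
    fix k assume "k \<in> d ` {..<Q*t}"
    then obtain i where "i < Q*t" "k = d i" by blast
    then show "A k \<in> sets M" using Asets Dval[OF that] by blast
  qed
  have indep: "P.indep_events A {1..}" using assms(9) unfolding A_def .
  have probA: "measure M (A k) = p k" if "k \<ge> 1" for k
    using assms(10)[OF that] unfolding A_def p_def \<alpha>_def by (simp add: minus_divide_left)
  have probG: "measure M (G d) = (\<Prod>k<Q*t. p (d k))" if d: "d \<in> D n" for d n
  proof -
    have J: "d ` {..<Q*t} \<subseteq> {1..}" using Dval[OF d] by auto
    have "measure M (G d) = (\<Prod>j\<in>d ` {..<Q*t}. measure M (A j))"
      unfolding G_def using indep J nonempty[of d] unfolding P.indep_events_def by blast
    also have "\<dots> = (\<Prod>j\<in>d ` {..<Q*t}. p j)"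
      using J probA by (intro prod.cong) auto
    also have "\<dots> = (\<Prod>k<Q*t. p (d k))"
      by (rule prod.reindex[OF Dmem(2)[OF d], unfolded comp_def])
    finally show ?thesis .
  qed
  have Usets: "U n \<in> sets M" for n
    unfolding U_def using finD Gsets by (intro sets.finite_UN) auto
  have measU: "measure M (U n) \<le> (\<Sum>d\<in>D n. \<Prod>k<Q*t. p (d k))" for n
  proof -
    have "measure M (U n) \<le> (\<Sum>d\<in>D n. measure M (G d))"
      unfolding U_def by (rule P.finite_measure_subadditive_finite[OF finD]) (use Gsets in blast)
    also have "\<dots> = (\<Sum>d\<in>D n. \<Prod>k<Q*t. p (d k))" using probG by (intro sum.cong) auto
    finally show ?thesis .
  qed
  have sumD: "(\<Sum>d\<in>D n. \<Prod>k<Q*t. p (d k)) \<le> S n ^ Q" for n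
  proof -
    have "(\<Sum>d\<in>D n. \<Prod>k<Q*t. p (d k)) \<le> (\<Sum>d\<in>D' n. \<Prod>k<Q*t. p (d k))"
      by (rule sum_mono2[OF finD' DD']) (simp add: prod_nonneg p0)
    also have "\<dots> \<le> S n ^ Q"
      unfolding D'_def S_def T_def by (rule block_bound[OF p0 t])
    finally show ?thesis .
  qed
  have expo: "real (t-1) * (1-\<alpha>) - \<alpha> \<le> -\<beta>"
  proof -
    have t1: "real (t-1) \<le> 2*real h - 2" using assms(3,4) h2 by (simp add: of_nat_diff)
    have a1: "1 - \<alpha> = 2/(4*real h - 1)" unfolding \<alpha>_def using h2 by (simp add: field_simps)
    have "real (t-1) * (1-\<alpha>) - \<alpha> = (2*real (t-1) - (4*real h - 3))/(4*real h - 1)"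
      unfolding a1 by (simp add: \<alpha>_def diff_divide_distrib)
    also have "\<dots> \<le> (-1)/(4*real h - 1)"
      using t1 h2 by (intro divide_right_mono) auto
    finally show ?thesis unfolding \<beta>_def by simp
  qed
  have Sbound: "S n \<le> K * real n powr (-\<beta>)" if n: "n \<ge> 1" for n
  proof -
    have Fpos: "F > 0" unfolding F_def using assms(5) t
      by (metis One_nat_def le_eq_less_or_eq lessI lessThan_iff sum_pos2 finite_lessThan less_imp_le_nat zero_less_one)
    have "S n \<le> real t * ((real n / real F) powr (-\<alpha>) * (real n powr (1-\<alpha>) / (1-\<alpha>)) ^ (t-1))"
      unfolding S_def T_def p_def by (rule rep_bound[OF \<alpha> t assms(5) F_def[symmetric] n])
    also have "\<dots> = K * (real n powr (-\<alpha>) * real n powr (real (t-1) * (1-\<alpha>)))"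
    proof -
      have "(real n / real F) powr (-\<alpha>) = real n powr (-\<alpha>) * real F powr \<alpha>"
      proof -
        have "(real n / real F) powr (-\<alpha>) = real n powr (-\<alpha>) / real F powr (-\<alpha>)" by (rule powr_divide)
        also have "real F powr (-\<alpha>) = 1 / real F powr \<alpha>" by (rule powr_minus_divide)
        finally show ?thesis using Fpos by simp
      qed
      moreover have "(real n powr (1-\<alpha>) / (1-\<alpha>)) ^ (t-1) = real n powr (real (t-1) * (1-\<alpha>)) * (1/(1-\<alpha>))^(t-1)"
      proof -
        have nz: "real n \<noteq> 0" using n by simp
        have "(real n powr (1-\<alpha>) / (1-\<alpha>)) ^ (t-1) = (real n powr (1-\<alpha>)) ^ (t-1) * (1/(1-\<alpha>))^(t-1)"
          by (simp add: power_mult_distrib divide_inverse)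
        also have "(real n powr (1-\<alpha>)) ^ (t-1) = real n powr (real (t-1) * (1-\<alpha>))"
          by (rule powr_power[OF nz])
        finally show ?thesis .
      qed
      ultimately show ?thesis unfolding K_def by (simp add: algebra_simps)
    qed
    also have "real n powr (-\<alpha>) * real n powr (real (t-1) * (1-\<alpha>)) = real n powr (real (t-1) * (1-\<alpha>) - \<alpha>)"
      by (simp add: powr_add[symmetric])
    also have "\<dots> \<le> real n powr (-\<beta>)" using n expo by (intro powr_mono) auto
    finally show ?thesis using K0 by (simp add: mult_left_mono)
  qed
  have Ubound: "measure M (U n) \<le> K^Q * real n powr (-(\<beta> * real Q))" if n: "n \<ge> 1" for n
  proof -
    have S0: "S n \<ge> 0" unfolding S_def by (intro sum_nonneg prod_nonneg) (simp add: p0)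
    have "measure M (U n) \<le> S n ^ Q" using measU[of n] sumD[of n] by linarith
    also have "\<dots> \<le> (K * real n powr (-\<beta>)) ^ Q" by (rule power_mono[OF Sbound[OF n] S0])
    also have "\<dots> = K^Q * real n powr (-(\<beta> * real Q))"
      using n by (simp add: power_mult_distrib powr_power mult.commute)
    finally show ?thesis .
  qed
  have "\<beta> * real Q > 1" unfolding \<beta>_def Q_def using h2 by (simp add: field_simps)
  then have "summable (\<lambda>n. real n powr (-(\<beta> * real Q)))" by (subst summable_real_powr_iff) auto
  then have summ: "summable (\<lambda>n. K^Q * real n powr (-(\<beta> * real Q)))" by (rule summable_mult)
  have "summable (\<lambda>n. measure M (U n))"
  proof (rule summable_comparison_test_ev[OF _ summ])
    show "\<forall>\<^sub>F n in sequentially. norm (measure M (U n)) \<le> K^Q * real n powr (-(\<beta> * real Q))"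
      using eventually_ge_at_top[of "1::nat"] by eventually_elim (use Ubound in simp)
  qed
  then have AE1: "AE \<omega> in M. \<forall>\<^sub>F n in sequentially. \<omega> \<in> space M - U n"
    by (intro borel_cantelli_AE1 Usets) (auto simp: less_top[symmetric])
  have imp: "AE \<omega> in M. (\<forall>\<^sub>F n in sequentially. \<omega> \<in> space M - U n) \<longrightarrow> (\<forall>\<^sub>F n in sequentially. RDist (B \<omega>) f t n \<le> 4*h)"
  proof (rule AE_I2)
    fix \<omega> assume \<omega>: "\<omega> \<in> space M"
    show "(\<forall>\<^sub>F n in sequentially. \<omega> \<in> space M - U n) \<longrightarrow> (\<forall>\<^sub>F n in sequentially. RDist (B \<omega>) f t n \<le> 4*h)"
    proof
      assume ev: "\<forall>\<^sub>F n in sequentially. \<omega> \<in> space M - U n"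
      show "\<forall>\<^sub>F n in sequentially. RDist (B \<omega>) f t n \<le> 4*h"
        using ev
      proof eventually_elim
        case (elim n)
        have "\<not> dist_reps (B \<omega>) f t n Q"
        proof
          assume "dist_reps (B \<omega>) f t n Q"
          from dist_reps_witness[OF this assms(7)[OF \<omega>] assms(5)]
          obtain d where d: "d \<in> D n" "d ` {..<Q*t} \<subseteq> B \<omega>" unfolding D_def by blast
          have "\<omega> \<in> G d" unfolding G_def A_def using d(2) \<omega> by blast
          then have "\<omega> \<in> U n" unfolding U_def using d(1) by blast
          then show False using elim by blast
        qed
        then show ?case unfolding Q_def by (rule RDist_le)
      qed
    qed
  qed
  show ?thesis using AE_mp[OF AE1 imp] .
qed

end
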